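(* Let $R$ be a ring with unity and involution $*$, and let $a,b,c\in R$. The following conditions are equivalent. (1) $a$ is left dual $(b,c)$-core invertible. (2) There exists some $x\in Rc$ such that $bxab=b$, $(xab)^*=xab$ and $xabx=x$. (3) There exists some $x\in R$ such that $bxab=b$, $xR=b^*R$ and $Rx\subseteq Rc$. (4) There exists some $x\in R$ such that $bxab=b$, $l(x)=l(b^* )$ and $Rx\subseteq Rc$. (5) There exists some $x\in R$ such that $bxab=b$, $Rx\subseteq Rc$ and $xR\subseteq b^*R$. (6) There exists some $x\in R$ such that $bxab=b$, $Rx\subseteq Rc$ and $l(b^* )\subseteq l(x)$. (7) There exist a projection $q\in R$ and an idempotent $p\in R$ such that $Rb\subseteq Rq\subseteq Rab$, $Rp\subseteq Rc$ and $abR\subseteq pR$. In this case (with $q,p$ as in (7)), for any inner inverse $(ab)^-$ of $ab$, the element $q(ab)^-p$ is a left dual $(b,c)$-core inverse of $a$.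
   Context: An element $a\in R$ is called left dual $(b,c)$-core invertible if there exists $x\in Rc$ such that $bxab=b$ and $(xab)^*=xab$; such an $x$ is called a left dual $(b,c)$-core inverse of $a$ (it need not be unique). For $x\in R$, $l(x)=\{r\in R: rx=0\}$ is the left annihilator of $x$. A projection is an element $q$ with $q^2=q=q^*$. An inner inverse of $y$ is any $z$ with $yzy=y$. *)

theory Defs
  imports Main
begin

class ring_involution = ring_1 +
  fixes star :: "'a \<Rightarrow> 'a"
  assumes star_add: "star (x + y) = star x + star y"
      and star_mult: "star (x * y) = star y * star x"
      and star_star: "star (star x) = x"

definition left_ideal :: "'a::ring_1 \<Rightarrow> 'a set" where
  "left_ideal x = {r * x | r. True}"

definition right_ideal :: "'a::ring_1 \<Rightarrow> 'a set" where
  "right_ideal x = {x * r | r. True}"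

definition lann :: "'a::ring_1 \<Rightarrow> 'a set" where
  "lann x = {r. r * x = 0}"

definition projection :: "'a::ring_involution \<Rightarrow> bool" where
  "projection q \<longleftrightarrow> q * q = q \<and> star q = q"

definition idempotent :: "'a::ring_1 \<Rightarrow> bool" where
  "idempotent p \<longleftrightarrow> p * p = p"

definition inner_inverse :: "'a::ring_1 \<Rightarrow> 'a \<Rightarrow> bool" where
  "inner_inverse z y \<longleftrightarrow> y * z * y = y"

definition left_dual_core_inverse :: "'a::ring_involution \<Rightarrow> 'a \<Rightarrow> 'a \<Rightarrow> 'a \<Rightarrow> bool" where
  "left_dual_core_inverse a b c x \<longleftrightarrow>
     x \<in> left_ideal c \<and> b * x * a * b = b \<and> star (x * a * b) = x * a * b"

definition left_dual_core_invertible :: "'a::ring_involution \<Rightarrow> 'a \<Rightarrow> 'a \<Rightarrow> bool" where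
  "left_dual_core_invertible a b c \<longleftrightarrow> (\<exists>x. left_dual_core_inverse a b c x)"

end

theory Submission
  imports Defs
begin

lemma li_sub: "left_ideal (x::'a::ring_1) \<subseteq> left_ideal y \<longleftrightarrow> (\<exists>r. x = r * y)"
proof
  assume "left_ideal x \<subseteq> left_ideal y"
  moreover have "x \<in> left_ideal x" unfolding left_ideal_def by (metis (mono_tags) mem_Collect_eq mult_1)
  ultimately show "\<exists>r. x = r * y" unfolding left_ideal_def by blast
next
  assume "\<exists>r. x = r * y"
  then obtain r where "x = r * y" by blast
  then show "left_ideal x \<subseteq> left_ideal y" unfolding left_ideal_def
    by (auto simp: mult.assoc[symmetric])
qed

lemma ri_sub: "right_ideal (x::'a::ring_1) \<subseteq> right_ideal y \<longleftrightarrow> (\<exists>r. x = y * r)"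
proof
  assume "right_ideal x \<subseteq> right_ideal y"
  moreover have "x \<in> right_ideal x" unfolding right_ideal_def by (metis (mono_tags) mem_Collect_eq mult_1_right)
  ultimately show "\<exists>r. x = y * r" unfolding right_ideal_def by blast
next
  assume "\<exists>r. x = y * r"
  then obtain r where "x = y * r" by blast
  then show "right_ideal x \<subseteq> right_ideal y" unfolding right_ideal_def
    by (auto simp: mult.assoc)
qed

lemma lann_sub: "lann y \<subseteq> lann x \<longleftrightarrow> (\<forall>r. r * y = 0 \<longrightarrow> r * x = 0)"
  unfolding lann_def by auto

lemma star_diff: "star ((x::'a::ring_involution) - y) = star x - star y"
  by (metis add_diff_cancel diff_add_cancel star_add)

lemma C6_C1:
  fixes a b c x :: "'a::ring_involution"
  assumes h1: "b * x * a * b = b" and h2: "x = r * c" and h3: "\<forall>s. s * star b = 0 \<longrightarrow> s * x = 0"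
  shows "left_dual_core_inverse a b c x"
proof -
  have "star (x*a*b) * star b = star b"
    by (metis h1 star_mult mult.assoc)
  then have "(1 - star (x*a*b)) * star b = 0" by (simp add: left_diff_distrib)
  then have "(1 - star (x*a*b)) * x = 0" using h3 by blast
  then have e: "x = star (x*a*b) * x" by (simp add: left_diff_distrib)
  have "x*a*b = star (x*a*b) * (x*a*b)" using e by (metis mult.assoc)
  moreover then have "star (x*a*b) = x*a*b" by (metis star_mult star_star)
  ultimately show ?thesis unfolding left_dual_core_inverse_def left_ideal_def using h1 h2 by auto
qed

theorem theorem2p2:
  fixes a b c :: "'a::ring_involution"
  defines "C1 \<equiv> left_dual_core_invertible a b c"
      and "C2 \<equiv> (\<exists>x. x \<in> left_ideal c \<and> b * x * a * b = b \<and> star (x * a * b) = x * a * b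
                       \<and> x * a * b * x = x)"
      and "C3 \<equiv> (\<exists>x. b * x * a * b = b \<and> right_ideal x = right_ideal (star b)
                       \<and> left_ideal x \<subseteq> left_ideal c)"
      and "C4 \<equiv> (\<exists>x. b * x * a * b = b \<and> lann x = lann (star b)
                       \<and> left_ideal x \<subseteq> left_ideal c)"
      and "C5 \<equiv> (\<exists>x. b * x * a * b = b \<and> left_ideal x \<subseteq> left_ideal c
                       \<and> right_ideal x \<subseteq> right_ideal (star b))"
      and "C6 \<equiv> (\<exists>x. b * x * a * b = b \<and> left_ideal x \<subseteq> left_ideal c
                       \<and> lann (star b) \<subseteq> lann x)"
      and "C7 \<equiv> (\<lambda>q p. projection q \<and> idempotent p
                       \<and> left_ideal b \<subseteq> left_ideal q \<and> left_ideal q \<subseteq> left_ideal (a * b)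
                       \<and> left_ideal p \<subseteq> left_ideal c \<and> right_ideal (a * b) \<subseteq> right_ideal p)"
  shows "(C1 \<longleftrightarrow> C2) \<and> (C1 \<longleftrightarrow> C3) \<and> (C1 \<longleftrightarrow> C4) \<and> (C1 \<longleftrightarrow> C5) \<and> (C1 \<longleftrightarrow> C6)
         \<and> (C1 \<longleftrightarrow> (\<exists>q p. C7 q p))
         \<and> (\<forall>q p z. C7 q p \<and> inner_inverse z (a * b) \<longrightarrow> left_dual_core_inverse a b c (q * z * p))"
proof -
  have mem: "x \<in> left_ideal c \<longleftrightarrow> (\<exists>r. x = r * c)" for x
    unfolding left_ideal_def by auto
  have 12: "C2" if "C1"
  proof -
    from that obtain x r where x: "x = r*c" "b*x*a*b = b" "star (x*a*b) = x*a*b"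
      unfolding C1_def left_dual_core_invertible_def left_dual_core_inverse_def left_ideal_def by auto
    define y where "y = x*a*b*x"
    have "y = (x*a*b*r)*c" using x(1) y_def by (simp add: mult.assoc)
    moreover have "b*y*a*b = b" using x(2) unfolding y_def by (metis mult.assoc)
    moreover have yab: "y*a*b = x*a*b" using x(2) unfolding y_def by (metis mult.assoc)
    moreover have "y*a*b*y = y" using x(2) unfolding y_def yab by (metis mult.assoc)
    ultimately show ?thesis unfolding C2_def mem using x(3) by metis
  qed
  have 21: "C1" if "C2" using that unfolding C1_def C2_def left_dual_core_invertible_def left_dual_core_inverse_def
    by blast
  have 23: "C3" if "C2"
  proof -
    from that obtain x r where x: "x = r*c" "b*x*a*b = b" "star (x*a*b) = x*a*b" "x*a*b*x = x"
      unfolding C2_def mem by auto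
    have "x = star (x*a*b) * x" using x(3,4) by simp
    then have e1: "x = star b * (star a * star x * x)" by (simp add: star_mult mult.assoc)
    have "star b = star (b*x*a*b)" using x(2) by simp
    also have "\<dots> = star (x*a*b) * star b" by (metis star_mult mult.assoc)
    finally have e2: "star b = x * (a*b*star b)" using x(3) by (simp add: mult.assoc)
    have "right_ideal x = right_ideal (star b)"
      using e1 e2 ri_sub by (metis subset_antisym)
    moreover have "left_ideal x \<subseteq> left_ideal c" using x(1) li_sub by blast
    ultimately show ?thesis unfolding C3_def using x(2) by blast
  qed
  have 34: "C4" if "C3"
  proof -
    from that obtain x where x: "b * x * a * b = b" "right_ideal x = right_ideal (star b)"
                       "left_ideal x \<subseteq> left_ideal c" unfolding C3_def by blast
    obtain u where u: "x = star b * u" using x(2) ri_sub by (metis order_refl)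
    obtain v where v: "star b = x * v" using x(2) ri_sub by (metis order_refl)
    have "lann x = lann (star b)" unfolding lann_def
    proof (intro set_eqI iffI; simp)
      fix t assume "t * x = 0" then show "t * star b = 0" using v by (metis mult.assoc mult_zero_left)
    next
      fix t assume "t * star b = 0" then show "t * x = 0" using u by (metis mult.assoc mult_zero_left)
    qed
    then show ?thesis unfolding C4_def using x by blast
  qed
  have 35: "C5" if "C3" using that unfolding C3_def C5_def by auto
  have 46: "C6" if "C4" using that unfolding C4_def C6_def by auto
  have 56: "C6" if "C5"
  proof -
    from that obtain x where x: "b * x * a * b = b" "left_ideal x \<subseteq> left_ideal c"
                       "right_ideal x \<subseteq> right_ideal (star b)" unfolding C5_def by blast
    obtain u where u: "x = star b * u" using x(3) ri_sub by blast
    have "lann (star b) \<subseteq> lann x" unfolding lann_sub using u by (auto simp: mult.assoc[symmetric])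
    then show ?thesis unfolding C6_def using x by blast
  qed
  have 61: "C1" if "C6"
  proof -
    from that obtain x where x: "b * x * a * b = b" "left_ideal x \<subseteq> left_ideal c"
                       "lann (star b) \<subseteq> lann x" unfolding C6_def by blast
    obtain r where "x = r * c" using x(2) li_sub by blast
    then show ?thesis unfolding C1_def left_dual_core_invertible_def
      using C6_C1[OF x(1)] x(3) lann_sub by blast
  qed
  have c7: "projection q \<and> idempotent p \<and> (\<exists>r1. b = r1 * q) \<and> (\<exists>r2. q = r2 * (a*b))
     \<and> (\<exists>r3. p = r3 * c) \<and> (\<exists>s. a*b = p*s)" if "C7 q p" for q p
    using that unfolding C7_def li_sub ri_sub by blast
  have 17: "\<exists>q p. C7 q p" if "C1"
  proof -
    from that obtain x r where x: "x = r*c" "b*x*a*b = b" "star (x*a*b) = x*a*b"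
      unfolding C1_def left_dual_core_invertible_def left_dual_core_inverse_def left_ideal_def by auto
    define q where "q = x*a*b"
    define p where "p = a*b*x"
    have "q*q = q" unfolding q_def using x(2) by (metis mult.assoc)
    then have "projection q" unfolding projection_def q_def using x(3) by simp
    moreover have "p*p = p" unfolding p_def using x(2) by (metis mult.assoc)
    then have "idempotent p" unfolding idempotent_def .
    moreover have "b = b*q" unfolding q_def using x(2) by (metis mult.assoc)
    moreover have "q = x*(a*b)" unfolding q_def by (simp add: mult.assoc)
    moreover have "p = (a*b*r)*c" unfolding p_def x(1) by (simp add: mult.assoc)
    moreover have "a*b = p*(a*b)" unfolding p_def using x(2) by (metis mult.assoc)
    ultimately have "C7 q p" unfolding C7_def li_sub ri_sub by blast
    then show ?thesis by blast
  qed
  have 71: "C1" if "\<exists>q p. C7 q p"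
  proof -
    from that obtain q p where "C7 q p" by blast
    from c7[OF this] obtain r1 r2 r3 s where h: "q*q = q" "star q = q" "p*p = p" "b = r1*q"
      "q = r2*(a*b)" "p = r3*c" "a*b = p*s" unfolding projection_def idempotent_def by blast
    have pab: "p*(a*b) = a*b" using h(3,7) by (metis mult.assoc)
    have bq: "b*q = b" using h(1,4) by (metis mult.assoc)
    have xab: "r2*p*a*b = q" using pab h(5) by (metis mult.assoc)
    have "left_dual_core_inverse a b c (r2*p)" unfolding left_dual_core_inverse_def mem
      using xab bq h(2,6) by (metis mult.assoc)
    then show ?thesis unfolding C1_def left_dual_core_invertible_def by blast
  qed
  have fin: "left_dual_core_inverse a b c (q * z * p)" if "C7 q p" "inner_inverse z (a*b)" for q p z
  proof -
    from c7[OF that(1)] obtain r1 r2 r3 s where h: "q*q = q" "star q = q" "p*p = p" "b = r1*q"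
      "q = r2*(a*b)" "p = r3*c" "a*b = p*s" unfolding projection_def idempotent_def by blast
    have zz: "a*b*z*(a*b) = a*b" using that(2) unfolding inner_inverse_def .
    have pab: "p*(a*b) = a*b" using h(3,7) by (metis mult.assoc)
    have bq: "b*q = b" using h(1,4) by (metis mult.assoc)
    have qz: "q*z*(a*b) = q" using zz h(5) by (metis mult.assoc)
    have xab: "q*z*p*a*b = q" using pab qz by (metis mult.assoc)
    show ?thesis unfolding left_dual_core_inverse_def mem
      using xab bq h(2,6) by (metis mult.assoc)
  qed
  show ?thesis using 12 21 23 34 35 46 56 61 17 71 fin by blast
qed

end
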